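(* Let $G$ be a graph and $v$ a vertex of $G$ of degree $d(v)$. Let $k$ and $C$ be positive integers with $k\geq d(v)+2$, and let $\alpha$ and $\beta$ be $k$-colourings of $G$. Suppose that there is a recolouring sequence from $\alpha_{\restriction (G-v)}$ to $\beta_{\restriction (G-v)}$ (in $G-v$) in which the vertices of the neighbourhood $N(v)$ are recoloured at most $C$ times in total. Then this sequence lifts to a recolouring sequence in $G$ from $\alpha$ to $\beta$ in which $v$ is recoloured at most $\lceil \frac{C}{k-d(v)-1}\rceil+1$ times.
   Context: All colourings are proper $k$-colourings (maps $V\to\{1,\dots,k\}$ with adjacent vertices receiving distinct colours). A recolouring sequence is a sequence of colourings in which consecutive colourings differ on exactly one vertex. For a subgraph $H$ of $G$ and a colouring $\sigma$ of $G$, $\sigma_{\restriction H}$ is the restriction of $\sigma$ to $H$. A recolouring sequence $s'$ of $H$ lifts to a recolouring sequence $s$ of $G$ if restricting the colourings of $s$ to $H$ (and deleting consecutive repetitions) yields $s'$, i.e. $s$ performs the recolourings of $s'$ in order, interleaved with recolourings of vertices outside $H$. *)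

theory Defs
  imports Complex_Main
begin

definition graph :: "'a set \<Rightarrow> ('a \<Rightarrow> 'a \<Rightarrow> bool) \<Rightarrow> bool" where
  "graph V E \<longleftrightarrow> finite V \<and> (\<forall>x y. E x y \<longrightarrow> E y x) \<and> (\<forall>x. \<not> E x x)
     \<and> (\<forall>x y. E x y \<longrightarrow> x \<in> V \<and> y \<in> V)"

definition neighbourhood :: "'a set \<Rightarrow> ('a \<Rightarrow> 'a \<Rightarrow> bool) \<Rightarrow> 'a \<Rightarrow> 'a set" where
  "neighbourhood V E v = {u \<in> V. E v u}"

definition degree :: "'a set \<Rightarrow> ('a \<Rightarrow> 'a \<Rightarrow> bool) \<Rightarrow> 'a \<Rightarrow> nat" where
  "degree V E v = card (neighbourhood V E v)"

text \<open>Proper k-colouring of the graph induced on vertex set V: a map V \<rightarrow> {1..k}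
(represented as a function that is 0 outside V, so colourings are equal iff they
agree on V) with adjacent vertices receiving distinct colours.\<close>

definition colouring :: "'a set \<Rightarrow> ('a \<Rightarrow> 'a \<Rightarrow> bool) \<Rightarrow> nat \<Rightarrow> ('a \<Rightarrow> nat) \<Rightarrow> bool" where
  "colouring V E k c \<longleftrightarrow> (\<forall>x\<in>V. c x \<in> {1..k}) \<and> (\<forall>x. x \<notin> V \<longrightarrow> c x = 0)
     \<and> (\<forall>x\<in>V. \<forall>y\<in>V. E x y \<longrightarrow> c x \<noteq> c y)"

definition restr :: "'a set \<Rightarrow> ('a \<Rightarrow> nat) \<Rightarrow> ('a \<Rightarrow> nat)" where
  "restr H c = (\<lambda>x. if x \<in> H then c x else 0)"

definition recol_seq :: "'a set \<Rightarrow> ('a \<Rightarrow> 'a \<Rightarrow> bool) \<Rightarrow> nat \<Rightarrow> ('a \<Rightarrow> nat) list \<Rightarrow> bool" where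
  "recol_seq V E k s \<longleftrightarrow> s \<noteq> [] \<and> (\<forall>c\<in>set s. colouring V E k c)
     \<and> (\<forall>i. Suc i < length s \<longrightarrow> card {x \<in> V. (s ! i) x \<noteq> (s ! Suc i) x} = 1)"

definition recol_count :: "'a set \<Rightarrow> ('a \<Rightarrow> nat) list \<Rightarrow> nat" where
  "recol_count S s = card {i. Suc i < length s \<and> (\<exists>x\<in>S. (s ! i) x \<noteq> (s ! Suc i) x)}"

definition lifts :: "'a set \<Rightarrow> ('a \<Rightarrow> nat) list \<Rightarrow> ('a \<Rightarrow> nat) list \<Rightarrow> bool" where
  "lifts H s' s \<longleftrightarrow> remdups_adj (map (restr H) s) = s'"

end

theory Submission
  imports Defs
begin

lemma recol_seq_single: "recol_seq V E k [x] \<longleftrightarrow> colouring V E k x"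
  unfolding recol_seq_def by auto

lemma recol_seq_cons2:
  "recol_seq V E k (x#y#r) \<longleftrightarrow> colouring V E k x \<and> card {z\<in>V. x z \<noteq> y z} = 1 \<and> recol_seq V E k (y#r)"
proof
  assume h: "recol_seq V E k (x#y#r)"
  have a: "\<forall>i. Suc i < length (x#y#r) \<longrightarrow> card {z \<in> V. ((x#y#r) ! i) z \<noteq> ((x#y#r) ! Suc i) z} = 1"
    using h unfolding recol_seq_def by blast
  have "card {z\<in>V. x z \<noteq> y z} = 1" using a[rule_format, of 0] by simp
  moreover have "\<forall>i. Suc i < length (y#r) \<longrightarrow> card {z \<in> V. ((y#r) ! i) z \<noteq> ((y#r) ! Suc i) z} = 1"
  proof (intro allI impI)
    fix i assume "Suc i < length (y#r)"
    then show "card {z \<in> V. ((y#r) ! i) z \<noteq> ((y#r) ! Suc i) z} = 1"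
      using a[rule_format, of "Suc i"] by simp
  qed
  ultimately show "colouring V E k x \<and> card {z\<in>V. x z \<noteq> y z} = 1 \<and> recol_seq V E k (y#r)"
    using h unfolding recol_seq_def by auto
next
  assume h: "colouring V E k x \<and> card {z\<in>V. x z \<noteq> y z} = 1 \<and> recol_seq V E k (y#r)"
  have a: "\<forall>i. Suc i < length (y#r) \<longrightarrow> card {z \<in> V. ((y#r) ! i) z \<noteq> ((y#r) ! Suc i) z} = 1"
    using h unfolding recol_seq_def by blast
  have "\<forall>i. Suc i < length (x#y#r) \<longrightarrow> card {z \<in> V. ((x#y#r) ! i) z \<noteq> ((x#y#r) ! Suc i) z} = 1"
  proof (intro allI impI)
    fix i assume i: "Suc i < length (x#y#r)"
    show "card {z \<in> V. ((x#y#r) ! i) z \<noteq> ((x#y#r) ! Suc i) z} = 1"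
    proof (cases i)
      case 0 then show ?thesis using h by simp
    next
      case (Suc j) then show ?thesis using a[rule_format, of j] i by simp
    qed
  qed
  then show "recol_seq V E k (x#y#r)" using h unfolding recol_seq_def by auto
qed

lemma recol_count_single: "recol_count S [x] = 0"
  unfolding recol_count_def by simp

lemma recol_count_cons2:
  "recol_count S (x#y#r) = (if \<exists>z\<in>S. x z \<noteq> y z then 1 else 0) + recol_count S (y#r)"
proof -
  let ?I = "{i. Suc i < length (y#r) \<and> (\<exists>z\<in>S. ((y#r)!i) z \<noteq> ((y#r)! Suc i) z)}"
  let ?A = "(if \<exists>z\<in>S. x z \<noteq> y z then {0} else {}) :: nat set"
  have eq: "{i. Suc i < length (x#y#r) \<and> (\<exists>z\<in>S. ((x#y#r)!i) z \<noteq> ((x#y#r)!Suc i) z)}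
      = ?A \<union> Suc ` ?I"
  proof (rule set_eqI)
    fix i show "i \<in> {i. Suc i < length (x#y#r) \<and> (\<exists>z\<in>S. ((x#y#r)!i) z \<noteq> ((x#y#r)!Suc i) z)}
      \<longleftrightarrow> i \<in> ?A \<union> Suc ` ?I"
      by (cases i) auto
  qed
  have fin: "finite ?I" by (rule finite_subset[of _ "{..<length (y#r)}"]) auto
  have dis: "?A \<inter> Suc ` ?I = {}" by auto
  have "card (?A \<union> Suc ` ?I) = card ?A + card (Suc ` ?I)"
    by (rule card_Un_disjoint) (use fin dis in auto)
  moreover have "card (Suc ` ?I) = card ?I" by (simp add: card_image)
  ultimately show ?thesis unfolding recol_count_def eq by simp
qed

fun hf :: "'a set \<Rightarrow> nat \<Rightarrow> ('a \<Rightarrow> nat) list \<Rightarrow> nat" where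
  "hf N a (x#y#r) = (if \<exists>z\<in>N. x z \<noteq> y z then
      (if \<exists>z\<in>N. x z \<noteq> y z \<and> y z = a then 0 else Suc (hf N a (y#r))) else hf N a (y#r))"
| "hf N a _ = 0"

lemma hf_le: "hf N a L \<le> recol_count N L"
  by (induction N a L rule: hf.induct) (auto simp: recol_count_cons2 recol_count_single)

lemma hf_inj:
  assumes "N \<subseteq> W"
  shows "recol_seq W E k L \<Longrightarrow> hf N a L = hf N b L \<Longrightarrow> hf N a L < recol_count N L \<Longrightarrow> a = b"
proof (induction L)
  case Nil then show ?case by (simp add: recol_count_def)
next
  case (Cons x L')
  show ?case
  proof (cases L')
    case Nil then show ?thesis using Cons.prems by (simp add: recol_count_single)
  next
    fix y r assume Cons1: "L' = y # r"
    have cs: "colouring W E k x" "card {z\<in>W. x z \<noteq> y z} = 1" "recol_seq W E k L'"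
      using Cons.prems(1) unfolding Cons1 recol_seq_cons2 by auto
    obtain u where u: "{z\<in>W. x z \<noteq> y z} = {u}" using cs(2) card_1_singletonE by blast
    show ?thesis
    proof (cases "\<exists>z\<in>N. x z \<noteq> y z")
      case True
      note T = True
      show ?thesis
      proof (cases "\<exists>z\<in>N. x z \<noteq> y z \<and> y z = a")
        case True
        then obtain z where z: "z \<in> N" "x z \<noteq> y z" "y z = a" by blast
        have "hf N b (x#L') = 0" using Cons.prems(2) True T Cons1 by simp
        then obtain w where w: "w\<in>N" "x w \<noteq> y w" "y w = b" using T Cons1 by (auto split: if_splits)
        have "z = u" "w = u" using z w u assms by auto
        then show ?thesis using z w by simp
      next
        case False
        have hb: "\<not> (\<exists>z\<in>N. x z \<noteq> y z \<and> y z = b)"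
        proof
          assume "\<exists>z\<in>N. x z \<noteq> y z \<and> y z = b"
          then have "hf N b (x#L') = 0" using Cons1 by auto
          moreover have "hf N a (x#L') = Suc (hf N a L')" using False T Cons1 by simp
          ultimately show False using Cons.prems(2) by simp
        qed
        have "hf N b (x#L') = Suc (hf N b L')" using hb T Cons1 by simp
        moreover have "hf N a (x#L') = Suc (hf N a L')" using False T Cons1 by simp
        ultimately have "hf N a L' = hf N b L'" using Cons.prems(2) by simp
        moreover have "hf N a L' < recol_count N L'"
          using Cons.prems(3) False T Cons1 by (simp add: recol_count_cons2)
        ultimately show ?thesis using Cons.IH cs(3) by blast
      qed
    next
      case False
      then show ?thesis using Cons.IH cs(3) Cons.prems Cons1 by (simp add: recol_count_cons2)
    qed
  qed
qed

lemma arith1: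
  fixes m R h :: nat
  assumes "m \<ge> 1" "min (m-1) R \<le> h"
  shows "1 + (R - h + m - 1) div m \<le> (R + m) div m"
proof (cases "h < R")
  case True
  then have "R - h + m - 1 \<le> R" using assms by linarith
  then have "(R - h + m - 1) div m \<le> R div m" by (rule div_le_mono)
  moreover have "(R + m) div m = R div m + 1" using assms by simp
  ultimately show ?thesis by simp
next
  case False
  then have "h \<ge> R" by linarith
  then have "R - h + m - 1 = m - 1" by simp
  then have "(R - h + m - 1) div m = 0" using assms by simp
  moreover have "(R + m) div m \<ge> 1" using assms by (simp add: div_add_self2)
  ultimately show ?thesis by simp
qed

lemma ceil_bound:
  fixes C m :: nat
  assumes "m > 0"
  shows "(C + m - 1) div m \<le> nat \<lceil>real C / real m\<rceil>"
proof -
  define q where "q = nat \<lceil>real C / real m\<rceil>"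
  have "real C / real m \<le> real q" unfolding q_def by linarith
  then have "real C \<le> real q * real m" using assms by (simp add: divide_le_eq)
  then have "C \<le> q * m" by (metis of_nat_le_iff of_nat_mult)
  then have "C + m - 1 < (q + 1) * m" using assms by simp
  then have "(C + m - 1) div m < q + 1" using assms by (simp add: div_less_iff_less_mult)
  then show ?thesis unfolding q_def by simp
qed

lemma main:
  assumes G: "graph V E" and vV: "v \<in> V" and W: "W = V - {v}" and N: "N = neighbourhood V E v"
    and m: "m = k - card N - 1" and km: "k \<ge> card N + 2"
  shows "recol_seq W E k L \<Longrightarrow> a \<in> {1..k} \<Longrightarrow> (\<forall>x\<in>N. hd L x \<noteq> a) \<Longrightarrow>
     b \<in> {1..k} \<Longrightarrow> (\<forall>x\<in>N. last L x \<noteq> b) \<Longrightarrow>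
     \<exists>s. recol_seq V E k s \<and> hd s = (hd L)(v:=a) \<and> last s = (last L)(v:=b)
        \<and> remdups_adj (map (restr W) s) = L
        \<and> recol_count {v} s \<le> (recol_count N L - hf N a L + m - 1) div m + 1"
proof (induction L arbitrary: a)
  case Nil then show ?case by (simp add: recol_seq_def)
next
  case (Cons c0 L')
  have NW: "N \<subseteq> W" using G W N unfolding graph_def neighbourhood_def by auto
  have finN: "finite N" using G N unfolding graph_def neighbourhood_def by auto
  have m1: "m \<ge> 1" using m km by linarith
  have col_upd: "colouring V E k (c(v:=a))"
    if "colouring W E k c" "a \<in> {1..k}" "\<forall>x\<in>N. c x \<noteq> a" for c a
    using that G W N vV unfolding colouring_def graph_def neighbourhood_def
    by (auto; metis)
  have restr_upd: "restr W (c(v:=a)) = c" if "colouring W E k c" for c a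
    using that W unfolding colouring_def restr_def by auto
  have stepW: "card {x\<in>V. (c0(v:=a)) x \<noteq> (c1(v:=a)) x} = 1"
    if "card {x\<in>W. c0 x \<noteq> c1 x} = 1" for c0 c1 :: "'a \<Rightarrow> nat" and a
  proof -
    have "{x\<in>V. (c0(v:=a)) x \<noteq> (c1(v:=a)) x} = {x\<in>W. c0 x \<noteq> c1 x}" using W by auto
    then show ?thesis using that by simp
  qed
  have stepv: "card {x\<in>V. (c(v:=a)) x \<noteq> (c(v:=a2)) x} = 1" if "a \<noteq> a2" for c :: "'a \<Rightarrow> nat" and a a2
  proof -
    have "{x\<in>V. (c(v:=a)) x \<noteq> (c(v:=a2)) x} = {v}" using vV that by auto
    then show ?thesis by simp
  qed
  show ?case
  proof (cases L')
    case Nil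
    have c0: "colouring W E k c0" using Cons.prems(1) Nil by (simp add: recol_seq_single)
    have ca: "colouring V E k (c0(v:=a))" using col_upd[OF c0 Cons.prems(2)] Cons.prems(3) by simp
    have cb: "colouring V E k (c0(v:=b))" using col_upd[OF c0 Cons.prems(4)] Cons.prems(5) Nil by simp
    show ?thesis
    proof (cases "a = b")
      case True
      show ?thesis
        by (rule exI[of _ "[c0(v:=a)]"])
           (use ca True Nil restr_upd[OF c0] in \<open>simp add: recol_seq_single recol_count_single\<close>)
    next
      case False
      have "recol_seq V E k [c0(v:=a), c0(v:=b)]"
        using ca cb stepv[OF False] by (simp add: recol_seq_cons2 recol_seq_single)
      moreover have "recol_count {v} [c0(v:=a), c0(v:=b)] = 1"
        using False by (simp add: recol_count_cons2 recol_count_single)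
      ultimately show ?thesis
        by (intro exI[of _ "[c0(v:=a), c0(v:=b)]"]) (use Nil restr_upd[OF c0] in simp)
    qed
  next
    case (Cons c1 rest)
    note L'eq = Cons
    have cs: "colouring W E k c0" "card {z\<in>W. c0 z \<noteq> c1 z} = 1" "recol_seq W E k L'"
      using Cons.prems(1) unfolding L'eq recol_seq_cons2 by auto
    have c1: "colouring W E k c1" using cs(3) L'eq unfolding recol_seq_def by auto
    obtain u where u: "{z\<in>W. c0 z \<noteq> c1 z} = {u}" using cs(2) card_1_singletonE by blast
    have c0v: "c0 v = 0" "c1 v = 0" using cs(1) c1 W unfolding colouring_def by auto
    have same: "c1 y = c0 y" if "y \<noteq> u" for y
    proof (cases "y \<in> W")
      case True
      show ?thesis
      proof (rule ccontr)
        assume "c1 y \<noteq> c0 y"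
        then have "y \<in> {z\<in>W. c0 z \<noteq> c1 z}" using True by auto
        then show False using u that by simp
      qed
    next
      case False then show ?thesis using cs(1) c1 unfolding colouring_def by auto
    qed
    have "u \<in> {z\<in>W. c0 z \<noteq> c1 z}" using u by simp
    then have ne: "c0 \<noteq> c1" by auto
    have lastL: "last (c0 # L') = last L'" using L'eq by simp
    have hb: "\<forall>x\<in>N. last L' x \<noteq> b" using Cons.prems(5) lastL by simp
    have mapfix: "remdups_adj (c0 # map (restr W) s') = c0 # L'"
      if "remdups_adj (map (restr W) s') = L'" for s'
    proof -
      have "remdups_adj (c0 # map (restr W) s') = (case L' of [] \<Rightarrow> [c0] | y # xs \<Rightarrow> if c0 = y then y # xs else c0 # y # xs)"
        unfolding remdups_adj_Cons that by simp
      then show ?thesis using ne L'eq by simp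
    qed
    show ?thesis
    proof (cases "\<exists>z\<in>N. c0 z \<noteq> c1 z \<and> c1 z = a")
      case False
      have ha: "\<forall>x\<in>N. hd L' x \<noteq> a"
        using False Cons.prems(3) L'eq by auto
      obtain s' where s': "recol_seq V E k s'" "hd s' = (hd L')(v:=a)" "last s' = (last L')(v:=b)"
        "remdups_adj (map (restr W) s') = L'"
        "recol_count {v} s' \<le> (recol_count N L' - hf N a L' + m - 1) div m + 1"
        using Cons.IH[OF cs(3) Cons.prems(2) ha Cons.prems(4) hb] by blast
      obtain y r where yr: "s' = y # r" using s'(1) unfolding recol_seq_def by (cases s') auto
      have y: "y = c1(v:=a)" using s'(2) yr L'eq by simp
      have ca: "colouring V E k (c0(v:=a))" using col_upd[OF cs(1) Cons.prems(2)] Cons.prems(3) by simp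
      have rs: "recol_seq V E k (c0(v:=a) # s')"
        using ca stepW[OF cs(2)] s'(1) yr y by (simp add: recol_seq_cons2)
      have cnt: "recol_count {v} (c0(v:=a) # s') = recol_count {v} s'"
        using yr y by (simp add: recol_count_cons2)
      have arith: "recol_count N (c0 # L') - hf N a (c0 # L') = recol_count N L' - hf N a L'"
        using False L'eq hf_le[of N a L'] by (auto simp: recol_count_cons2)
      show ?thesis
        apply (rule exI[of _ "c0(v:=a) # s'"])
        using rs s' cnt arith mapfix[OF s'(4)] restr_upd[OF cs(1)] lastL yr by simp
    next
      case True
      then have hit: "c1 u = a" "u \<in> N" using u NW by auto
      define Cand where "Cand = {1..k} - (c0 ` N \<union> {a})"
      have finC: "finite Cand" unfolding Cand_def by simp
      have "card (c0 ` N \<union> {a}) \<le> card N + 1"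
        using finN card_image_le[OF finN, of c0] card_Un_le[of "c0 ` N" "{a}"] by simp
      then have cardC: "card Cand \<ge> m"
        unfolding Cand_def m using diff_card_le_card_Diff[of "c0 ` N \<union> {a}" "{1..k}"] finN by simp
      have "\<exists>a2\<in>Cand. \<not> hf N a2 L' < min (m-1) (recol_count N L')"
      proof (rule ccontr)
        assume "\<not> ?thesis"
        then have lt: "\<forall>c\<in>Cand. hf N c L' < min (m-1) (recol_count N L')" by auto
        have "inj_on (\<lambda>c. hf N c L') Cand"
          using lt hf_inj[OF NW cs(3)] unfolding inj_on_def by auto
        moreover have "(\<lambda>c. hf N c L') ` Cand \<subseteq> {..<m-1}" using lt by auto
        ultimately have "card Cand \<le> card {..<m-1}" by (meson card_inj_on_le finite_lessThan)
        then show False using cardC m1 by simp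
      qed
      then obtain a2 where a2: "a2 \<in> Cand" "min (m-1) (recol_count N L') \<le> hf N a2 L'" by force
      have a2k: "a2 \<in> {1..k}" "a2 \<noteq> a" "\<forall>x\<in>N. c0 x \<noteq> a2" using a2 unfolding Cand_def by auto
      have ha2: "\<forall>x\<in>N. hd L' x \<noteq> a2"
      proof
        fix x assume x: "x \<in> N"
        show "hd L' x \<noteq> a2"
        proof (cases "x = u")
          case True then show ?thesis using hit a2k L'eq by simp
        next
          case False then show ?thesis using same[OF False] a2k x L'eq by simp
        qed
      qed
      obtain s' where s': "recol_seq V E k s'" "hd s' = (hd L')(v:=a2)" "last s' = (last L')(v:=b)"
        "remdups_adj (map (restr W) s') = L'"
        "recol_count {v} s' \<le> (recol_count N L' - hf N a2 L' + m - 1) div m + 1"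
        using Cons.IH[OF cs(3) a2k(1) ha2 Cons.prems(4) hb] by blast
      obtain y r where yr: "s' = y # r" using s'(1) unfolding recol_seq_def by (cases s') auto
      have y: "y = c1(v:=a2)" using s'(2) yr L'eq by simp
      have ca: "colouring V E k (c0(v:=a))" using col_upd[OF cs(1) Cons.prems(2)] Cons.prems(3) by simp
      have ca2: "colouring V E k (c0(v:=a2))" using col_upd[OF cs(1) a2k(1)] a2k(3) by simp
      have rs: "recol_seq V E k (c0(v:=a) # c0(v:=a2) # s')"
        using ca ca2 stepW[OF cs(2)] stepv[OF a2k(2)[symmetric]] s'(1) yr y
        by (simp add: recol_seq_cons2)
      have cnt: "recol_count {v} (c0(v:=a) # c0(v:=a2) # s') = 1 + recol_count {v} s'"
        using yr y a2k(2) by (simp add: recol_count_cons2)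
      have hf0: "hf N a (c0 # L') = 0" using True L'eq by auto
      have rc: "recol_count N (c0 # L') = 1 + recol_count N L'" using True L'eq by (auto simp: recol_count_cons2)
      have ar: "1 + (recol_count N L' - hf N a2 L' + m - 1) div m \<le> (recol_count N L' + m) div m"
        by (rule arith1[OF m1 a2(2)])
      have bound: "recol_count {v} (c0(v:=a) # c0(v:=a2) # s')
          \<le> (recol_count N (c0 # L') - hf N a (c0 # L') + m - 1) div m + 1"
        using cnt s'(5) ar hf0 rc by simp
      have rd: "remdups_adj (map (restr W) (c0(v:=a) # c0(v:=a2) # s')) = c0 # L'"
        using mapfix[OF s'(4)] restr_upd[OF cs(1)] by simp
      show ?thesis
        apply (rule exI[of _ "c0(v:=a) # c0(v:=a2) # s'"])
        using rs s' bound rd lastL yr by simp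
    qed
  qed
qed

theorem lemma1:
  fixes V :: "'a set" and E :: "'a \<Rightarrow> 'a \<Rightarrow> bool" and v :: 'a
    and k C :: nat and \<alpha> \<beta> :: "'a \<Rightarrow> nat" and s' :: "('a \<Rightarrow> nat) list"
  assumes "graph V E" and "v \<in> V"
    and "k > 0" and "C > 0" and "k \<ge> degree V E v + 2"
    and "colouring V E k \<alpha>" and "colouring V E k \<beta>"
    and "recol_seq (V - {v}) E k s'"
    and "hd s' = restr (V - {v}) \<alpha>" and "last s' = restr (V - {v}) \<beta>"
    and "recol_count (neighbourhood V E v) s' \<le> C"
  shows "\<exists>s. recol_seq V E k s \<and> hd s = \<alpha> \<and> last s = \<beta> \<and> lifts (V - {v}) s' s
           \<and> recol_count {v} s
               \<le> nat \<lceil>real C / real (k - degree V E v - 1)\<rceil> + 1"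
proof -
  define N where "N = neighbourhood V E v"
  define W where "W = V - {v}"
  define m where "m = k - card N - 1"
  have dg: "degree V E v = card N" unfolding N_def degree_def by simp
  have km: "k \<ge> card N + 2" using assms(5) dg by simp
  have m1: "m \<ge> 1" using km m_def by linarith
  have NV: "\<And>x. x \<in> N \<Longrightarrow> x \<in> V \<and> E v x \<and> x \<noteq> v"
    using assms(1) unfolding N_def neighbourhood_def graph_def by auto
  have av: "\<alpha> v \<in> {1..k}" "\<beta> v \<in> {1..k}" using assms(2,6,7) unfolding colouring_def by auto
  have ha: "\<forall>x\<in>N. hd s' x \<noteq> \<alpha> v"
  proof
    fix x assume x: "x \<in> N"
    have "hd s' x = \<alpha> x" using assms(9) NV[OF x] unfolding restr_def by simp
    moreover have "\<alpha> v \<noteq> \<alpha> x" using assms(6) NV[OF x] assms(2) unfolding colouring_def by blast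
    ultimately show "hd s' x \<noteq> \<alpha> v" by simp
  qed
  have hb: "\<forall>x\<in>N. last s' x \<noteq> \<beta> v"
  proof
    fix x assume x: "x \<in> N"
    have "last s' x = \<beta> x" using assms(10) NV[OF x] unfolding restr_def by simp
    moreover have "\<beta> v \<noteq> \<beta> x" using assms(7) NV[OF x] assms(2) unfolding colouring_def by blast
    ultimately show "last s' x \<noteq> \<beta> v" by simp
  qed
  obtain s where s: "recol_seq V E k s" "hd s = (hd s')(v:=\<alpha> v)" "last s = (last s')(v:=\<beta> v)"
    "remdups_adj (map (restr W) s) = s'"
    "recol_count {v} s \<le> (recol_count N s' - hf N (\<alpha> v) s' + m - 1) div m + 1"
    using main[OF assms(1,2) W_def N_def m_def km, OF assms(8)[folded W_def] av(1) ha av(2) hb]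
    by blast
  have h1: "(hd s')(v:=\<alpha> v) = \<alpha>"
    using assms(9,6) unfolding restr_def colouring_def by (auto simp: fun_eq_iff)
  have h2: "(last s')(v:=\<beta> v) = \<beta>"
    using assms(10,7) unfolding restr_def colouring_def by (auto simp: fun_eq_iff)
  have "recol_count N s' - hf N (\<alpha> v) s' + m - 1 \<le> C + m - 1"
    using assms(11) unfolding N_def by linarith
  then have "(recol_count N s' - hf N (\<alpha> v) s' + m - 1) div m \<le> (C + m - 1) div m"
    by (rule div_le_mono)
  also have "\<dots> \<le> nat \<lceil>real C / real m\<rceil>" using ceil_bound m1 by simp
  finally have "recol_count {v} s \<le> nat \<lceil>real C / real (k - degree V E v - 1)\<rceil> + 1"
    using s(5) dg m_def by simp
  then show ?thesis
    using s h1 h2 unfolding lifts_def W_def by auto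
qed

end
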